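(* Let $\mathcal{G}=(\mathcal{N},\mathcal{P})$ be a connected directed graph with nodes $\mathcal{N}=\{1,\dots,N\}$, edges $\mathcal{P}$ written $\ell=(m,n)$, and edge-node incidence matrix $\mathbf{A}\in\mathbb{R}^{P\times N}$ ($A_{\ell,m}=+1$, $A_{\ell,n}=-1$ for $\ell=(m,n)$, zeros elsewhere in row $\ell$). The edges are partitioned into compressors $\mathcal{P}_a$ and lossy pipes $\bar{\mathcal{P}}_a=\mathcal{P}\setminus\mathcal{P}_a$. Assume (A1) no compressor edge belongs to a cycle of $\mathcal{G}$, and (A2) every edge of $\mathcal{G}$ belongs to at most one cycle. Fix a reference node $r$ with given value $\psi_r$, injections $\mathbf{q}\in\mathbb{R}^N$ with $\mathbf{1}^\top\mathbf{q}=0$, $a_\ell>0$ for $\ell\in\bar{\mathcal{P}}_a$, and $\alpha_\ell>0$ for $\ell\in\mathcal{P}_a$. Problem (G1): find $(\boldsymbol{\phi},\boldsymbol{\psi})\in\mathbb{R}^P\times\mathbb{R}^N$ with the given $\psi_r$ such that $\mathbf{A}^\top\boldsymbol{\phi}=\mathbf{q}$; $\psi_m-\psi_n=a_\ell\,\mathrm{sign}(\phi_\ell)\phi_\ell^2$ for all $\ell=(m,n)\in\bar{\mathcal{P}}_a$; $\psi_n\ge0$ for all $n\in\mathcal{N}$; and $\psi_n=\alpha_\ell\psi_m$, $\phi_\ell\ge0$ for all $\ell=(m,n)\in\mathcal{P}_a$. Problem (G2), for a constant $M>0$: minimize $r(\boldsymbol{\psi}):=\sum_{(m,n)\in\bar{\mathcal{P}}_a}|\psi_m-\psi_n|$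 over $\boldsymbol{\phi}\in\mathbb{R}^P$, $\boldsymbol{\psi}\in\mathbb{R}^N$ (with the given $\psi_r$) and $\mathbf{x}\in\{0,1\}^{\bar{\mathcal{P}}_a}$, subject to $\mathbf{A}^\top\boldsymbol{\phi}=\mathbf{q}$; $\psi_n=\alpha_\ell\psi_m$ and $\phi_\ell\ge0$ for all $\ell=(m,n)\in\mathcal{P}_a$; and, for every $\ell=(m,n)\in\bar{\mathcal{P}}_a$: $-M(1-x_\ell)\le\phi_\ell\le Mx_\ell$, $-M(1-x_\ell)\le\psi_m-\psi_n-a_\ell\phi_\ell^2$, and $\psi_m-\psi_n+a_\ell\phi_\ell^2\le Mx_\ell$. If (G1) is feasible, then for $M$ sufficiently large, for every minimizer $(\boldsymbol{\phi},\boldsymbol{\psi},\mathbf{x})$ of (G2), the pair $(\boldsymbol{\phi},\boldsymbol{\psi})$ solves (G1).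
   Context: $\mathrm{sign}(x)=+1$ for $x>0$, $-1$ for $x<0$, $0$ for $x=0$. A cycle is a closed path in the underlying undirected graph with no repeated edges or nodes. $M$ is a "big-M" constant, which the paper takes to be large. *)

theory Defs
  imports Main "HOL-Analysis.Analysis"
begin

text \<open>A directed multigraph: nodes of finite type 'n, edges of finite type 'e,
  edge l = (src l, dst l).\<close>

definition incidence :: "('e \<Rightarrow> 'n) \<Rightarrow> ('e \<Rightarrow> 'n) \<Rightarrow> 'e \<Rightarrow> 'n \<Rightarrow> real" where
  "incidence src dst l v = (if v = src l then 1 else if v = dst l then -1 else 0)"

definition incT :: "('e::finite \<Rightarrow> 'n) \<Rightarrow> ('e \<Rightarrow> 'n) \<Rightarrow> ('e \<Rightarrow> real) \<Rightarrow> 'n \<Rightarrow> real" where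
  "incT src dst phi v = (\<Sum>l\<in>UNIV. incidence src dst l v * phi l)"

definition joins :: "('e \<Rightarrow> 'n) \<Rightarrow> ('e \<Rightarrow> 'n) \<Rightarrow> 'e \<Rightarrow> 'n \<Rightarrow> 'n \<Rightarrow> bool" where
  "joins src dst l u v \<longleftrightarrow> (src l = u \<and> dst l = v) \<or> (src l = v \<and> dst l = u)"

definition connected_graph :: "('e \<Rightarrow> 'n) \<Rightarrow> ('e \<Rightarrow> 'n) \<Rightarrow> bool" where
  "connected_graph src dst \<longleftrightarrow>
     (\<forall>u v. (u, v) \<in> {(a, b). \<exists>l. joins src dst l a b}\<^sup>*)"

definition is_cycle :: "('e \<Rightarrow> 'n) \<Rightarrow> ('e \<Rightarrow> 'n) \<Rightarrow> 'e list \<Rightarrow> 'n list \<Rightarrow> bool" where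
  "is_cycle src dst es vs \<longleftrightarrow>
     length es = length vs \<and> length es \<ge> 2 \<and> distinct es \<and> distinct vs \<and>
     (\<forall>i < length es. joins src dst (es ! i) (vs ! i) (vs ! ((i + 1) mod length es)))"

definition cycle_edge_set :: "('e \<Rightarrow> 'n) \<Rightarrow> ('e \<Rightarrow> 'n) \<Rightarrow> 'e set \<Rightarrow> bool" where
  "cycle_edge_set src dst C \<longleftrightarrow> (\<exists>es vs. is_cycle src dst es vs \<and> C = set es)"

text \<open>Problem (G1) feasibility of (phi, psi).  Pa = compressors, -Pa = lossy pipes.\<close>
definition G1 :: "('e::finite \<Rightarrow> 'n) \<Rightarrow> ('e \<Rightarrow> 'n) \<Rightarrow> 'e set \<Rightarrow> 'n \<Rightarrow> real \<Rightarrow> ('n \<Rightarrow> real)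
    \<Rightarrow> ('e \<Rightarrow> real) \<Rightarrow> ('e \<Rightarrow> real) \<Rightarrow> ('e \<Rightarrow> real) \<Rightarrow> ('n \<Rightarrow> real) \<Rightarrow> bool" where
  "G1 src dst Pa r psi_r q a alpha phi psi \<longleftrightarrow>
     psi r = psi_r \<and>
     (\<forall>v. incT src dst phi v = q v) \<and>
     (\<forall>l. l \<notin> Pa \<longrightarrow> psi (src l) - psi (dst l) = a l * sgn (phi l) * (phi l)\<^sup>2) \<and>
     (\<forall>v. psi v \<ge> 0) \<and>
     (\<forall>l\<in>Pa. psi (dst l) = alpha l * psi (src l) \<and> phi l \<ge> 0)"

text \<open>Feasible set of Problem (G2) with big-M constant M; x is relevant only on pipes.\<close>
definition G2_feasible :: "('e::finite \<Rightarrow> 'n) \<Rightarrow> ('e \<Rightarrow> 'n) \<Rightarrow> 'e set \<Rightarrow> 'n \<Rightarrow> real \<Rightarrow> ('n \<Rightarrow> real)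
    \<Rightarrow> ('e \<Rightarrow> real) \<Rightarrow> ('e \<Rightarrow> real) \<Rightarrow> real
    \<Rightarrow> ('e \<Rightarrow> real) \<Rightarrow> ('n \<Rightarrow> real) \<Rightarrow> ('e \<Rightarrow> bool) \<Rightarrow> bool" where
  "G2_feasible src dst Pa r psi_r q a alpha M phi psi x \<longleftrightarrow>
     psi r = psi_r \<and>
     (\<forall>v. incT src dst phi v = q v) \<and>
     (\<forall>l\<in>Pa. psi (dst l) = alpha l * psi (src l) \<and> phi l \<ge> 0) \<and>
     (\<forall>l. l \<notin> Pa \<longrightarrow>
        - M * (1 - of_bool (x l)) \<le> phi l \<and> phi l \<le> M * of_bool (x l) \<and>
        - M * (1 - of_bool (x l)) \<le> psi (src l) - psi (dst l) - a l * (phi l)\<^sup>2 \<and>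
        psi (src l) - psi (dst l) + a l * (phi l)\<^sup>2 \<le> M * of_bool (x l))"

definition G2_obj :: "('e::finite \<Rightarrow> 'n) \<Rightarrow> ('e \<Rightarrow> 'n) \<Rightarrow> 'e set \<Rightarrow> ('n \<Rightarrow> real) \<Rightarrow> real" where
  "G2_obj src dst Pa psi = (\<Sum>l\<in>- Pa. \<bar>psi (src l) - psi (dst l)\<bar>)"

definition G2_minimizer where
  "G2_minimizer src dst Pa r psi_r q a alpha M phi psi x \<longleftrightarrow>
     G2_feasible src dst Pa r psi_r q a alpha M phi psi x \<and>
     (\<forall>phi' psi' x'. G2_feasible src dst Pa r psi_r q a alpha M phi' psi' x' \<longrightarrow>
        G2_obj src dst Pa psi \<le> G2_obj src dst Pa psi')"

end

theory Submission
  imports Defs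
begin


definition avoid_rel :: "('e \<Rightarrow> 'n) \<Rightarrow> ('e \<Rightarrow> 'n) \<Rightarrow> 'e set \<Rightarrow> ('n \<times> 'n) set" where
  "avoid_rel src dst F = {(a, b). \<exists>l. l \<notin> F \<and> joins src dst l a b}"

lemma joins_sym: "joins src dst l a b = joins src dst l b a"
  unfolding joins_def by auto

lemma simple_path:
  assumes "(u, v) \<in> (avoid_rel src dst F)\<^sup>*"
  shows "\<exists>ps es. length ps = Suc (length es) \<and> ps!0 = u \<and> ps!(length es) = v \<and> distinct ps \<and>
     (\<forall>i<length es. joins src dst (es!i) (ps!i) (ps!Suc i) \<and> es!i \<notin> F)"
  using assms
proof (induction rule: converse_rtrancl_induct)
  case base
  show ?case by (rule exI[of _ "[v]"], rule exI[of _ "[]"]) auto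
next
  case (step y z)
  from step.IH obtain ps es where P: "length ps = Suc (length es)" "ps!0 = z" "ps!(length es) = v"
    "distinct ps" "\<forall>i<length es. joins src dst (es!i) (ps!i) (ps!Suc i) \<and> es!i \<notin> F" by blast
  from step.hyps(1) obtain l where l: "l \<notin> F" "joins src dst l y z" by (auto simp: avoid_rel_def)
  show ?case
  proof (cases "y \<in> set ps")
    case True
    then obtain n where n: "n < length ps" "ps!n = y" by (auto simp: in_set_conv_nth)
    show ?thesis
    proof (rule exI[of _ "drop n ps"], rule exI[of _ "drop n es"], intro conjI allI impI)
      show "length (drop n ps) = Suc (length (drop n es))" using P n by auto
      show "drop n ps ! 0 = y" using P n by auto
      show "drop n ps ! length (drop n es) = v" using P n by auto
      show "distinct (drop n ps)" using P by auto
      fix i assume i: "i < length (drop n es)"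
      then have "n + i < length es" by auto
      then show "joins src dst (drop n es ! i) (drop n ps ! i) (drop n ps ! Suc i)"
          "drop n es ! i \<notin> F"
        using P n by auto
    qed
  next
    case False
    show ?thesis
      apply (rule exI[of _ "y # ps"], rule exI[of _ "l # es"])
      using P l False by (auto simp: nth_Cons split: nat.split)
  qed
qed

lemma joins_same:
  assumes "joins src dst l a b" "joins src dst l c d"
  shows "(a = c \<and> b = d) \<or> (a = d \<and> b = c)"
  using assms unfolding joins_def by auto

lemma path_cycle:
  assumes "(u, v) \<in> (avoid_rel src dst F)\<^sup>*" "u \<noteq> v" "joins src dst l0 v u" "l0 \<in> F"
  shows "\<exists>es vs. is_cycle src dst es vs \<and> l0 \<in> set es \<and> (\<forall>e\<in>set es. e = l0 \<or> e \<notin> F)"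
proof -
  obtain ps es where P: "length ps = Suc (length es)" "ps!0 = u" "ps!(length es) = v"
    "distinct ps" "\<forall>i<length es. joins src dst (es!i) (ps!i) (ps!Suc i) \<and> es!i \<notin> F"
    using simple_path[OF assms(1)] by blast
  have ne: "length es \<noteq> 0" using P assms(2) by auto
  have des: "distinct es"
    unfolding distinct_conv_nth
  proof (intro allI impI)
    fix i j assume ij: "i < length es" "j < length es" "i \<noteq> j"
    show "es ! i \<noteq> es ! j"
    proof
      assume eq: "es ! i = es ! j"
      have "(ps!i = ps!j \<and> ps!Suc i = ps!Suc j) \<or> (ps!i = ps!Suc j \<and> ps!Suc i = ps!j)"
        using joins_same[of src dst "es!i" "ps!i" "ps!Suc i" "ps!j" "ps!Suc j"] P(5) ij eq by auto
      then show False using P(1,4) ij by (auto simp: nth_eq_iff_index_eq)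
    qed
  qed
  have l0n: "l0 \<notin> set es" using P(5) assms(4) by (auto simp: in_set_conv_nth)
  have cyc: "is_cycle src dst (es @ [l0]) ps"
    unfolding is_cycle_def
  proof (intro conjI allI impI)
    show "length (es @ [l0]) = length ps" using P by simp
    show "2 \<le> length (es @ [l0])" using ne by (cases es) auto
    show "distinct (es @ [l0])" using des l0n by simp
    show "distinct ps" using P by simp
    fix i assume i: "i < length (es @ [l0])"
    show "joins src dst ((es @ [l0]) ! i) (ps ! i) (ps ! ((i + 1) mod length (es @ [l0])))"
    proof (cases "i < length es")
      case True
      then show ?thesis using P by (simp add: nth_append)
    next
      case False
      then have "i = length es" using i by simp
      then show ?thesis using P assms(3) by (simp add: nth_append)
    qed
  qed
  show ?thesis
    apply (rule exI[of _ "es @ [l0]"], rule exI[of _ ps])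
    using cyc P(5) by (auto simp: in_set_conv_nth)
qed

lemma cut_lemma:
  fixes g :: "'e::finite \<Rightarrow> real" and src dst :: "'e \<Rightarrow> 'n::finite"
  assumes nl: "\<forall>l. src l \<noteq> dst l" and circ: "\<forall>v. incT src dst g v = 0"
    and S: "S = {v. (u, v) \<in> (avoid_rel src dst F)\<^sup>*}"
  shows "(\<Sum>l\<in>F. g l * (of_bool (src l \<in> S) - of_bool (dst l \<in> S))) = 0"
proof -
  have inc: "incidence src dst l v = (if v = src l then 1 else 0) - (if v = dst l then 1 else 0)" for l v
    using nl unfolding incidence_def by auto
  have "(\<Sum>v\<in>S. incT src dst g v) = 0" using circ by simp
  moreover have "(\<Sum>v\<in>S. incT src dst g v) = (\<Sum>l\<in>UNIV. \<Sum>v\<in>S. incidence src dst l v * g l)"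
    unfolding incT_def by (rule sum.swap)
  moreover have "(\<Sum>v\<in>S. incidence src dst l v * g l) = g l * (of_bool (src l \<in> S) - of_bool (dst l \<in> S))" for l
  proof -
    have "(\<Sum>v\<in>S. incidence src dst l v * g l) = g l * (\<Sum>v\<in>S. incidence src dst l v)"
      by (simp add: sum_distrib_left mult.commute)
    also have "(\<Sum>v\<in>S. incidence src dst l v) = of_bool (src l \<in> S) - of_bool (dst l \<in> S)"
      unfolding inc by (simp add: sum_subtractf)
    finally show ?thesis .
  qed
  ultimately have U: "(\<Sum>l\<in>UNIV. g l * (of_bool (src l \<in> S) - of_bool (dst l \<in> S))) = 0" by simp
  have cl: "src l \<in> S \<longleftrightarrow> dst l \<in> S" if "l \<notin> F" for l
  proof -
    have "(src l, dst l) \<in> avoid_rel src dst F" "(dst l, src l) \<in> avoid_rel src dst F"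
      using that unfolding avoid_rel_def joins_def by auto
    then show ?thesis unfolding S by (auto intro: rtrancl_into_rtrancl)
  qed
  have "(\<Sum>l\<in>F. g l * (of_bool (src l \<in> S) - of_bool (dst l \<in> S))) =
        (\<Sum>l\<in>UNIV. g l * (of_bool (src l \<in> S) - of_bool (dst l \<in> S)))"
    by (rule sum.mono_neutral_left) (auto simp: cl)
  then show ?thesis using U by simp
qed

lemma cycle_join:
  assumes "is_cycle src dst es vs" "i < length es"
  shows "joins src dst (es!i) (vs!i) (vs!((i+1) mod length es))"
  using assms unfolding is_cycle_def by auto

lemma cycle_neq:
  assumes "is_cycle src dst es vs" "i < length es"
  shows "vs!i \<noteq> vs!((i+1) mod length es)"
proof -
  have L: "length vs = length es" "2 \<le> length es" "distinct vs" using assms unfolding is_cycle_def by auto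
  have "(i+1) mod length es \<noteq> i"
  proof (cases "i + 1 < length es")
    case True then show ?thesis by simp
  next
    case False then have "i + 1 = length es" using assms by simp
    then show ?thesis using L by simp
  qed
  moreover have "(i+1) mod length es < length es" using L(2) by (intro mod_less_divisor) linarith
  ultimately show ?thesis using L assms(2) by (simp add: nth_eq_iff_index_eq)
qed

lemma walk:
  assumes "is_cycle src dst es vs" "m + d < length es" "\<forall>e<d. es!(m+e) \<notin> F"
  shows "(vs!m, vs!(m+d)) \<in> (avoid_rel src dst F)\<^sup>*"
  using assms(2,3)
proof (induction d)
  case 0 then show ?case by simp
next
  case (Suc d)
  then have IH: "(vs!m, vs!(m+d)) \<in> (avoid_rel src dst F)\<^sup>*" by simp
  have md: "m + d < length es" using Suc.prems by simp
  have "joins src dst (es!(m+d)) (vs!(m+d)) (vs!((m+d+1) mod length es))"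
    using cycle_join[OF assms(1) md] by simp
  moreover have "(m+d+1) mod length es = m + Suc d" using Suc.prems by simp
  moreover have "es!(m+d) \<notin> F" using Suc.prems by simp
  ultimately have "(vs!(m+d), vs!(m + Suc d)) \<in> avoid_rel src dst F"
    unfolding avoid_rel_def by auto
  with IH show ?case by (rule rtrancl_into_rtrancl)
qed

definition orient :: "('e \<Rightarrow> 'n) \<Rightarrow> ('e \<Rightarrow> 'n) \<Rightarrow> 'e list \<Rightarrow> 'n list \<Rightarrow> nat \<Rightarrow> real" where
  "orient src dst es vs i = (if src (es!i) = vs!i then 1 else -1)"

lemma cycle_circ:
  fixes g :: "'e::finite \<Rightarrow> real" and src dst :: "'e \<Rightarrow> 'n::finite"
  assumes nl: "\<forall>l. src l \<noteq> dst l" and circ: "\<forall>v. incT src dst g v = 0"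
    and A2: "\<forall>l. \<forall>C C'. cycle_edge_set src dst C \<and> l \<in> C \<and> cycle_edge_set src dst C' \<and> l \<in> C'
                \<longrightarrow> C = C'"
    and cyc: "is_cycle src dst es vs" and j: "j < length es"
  shows "orient src dst es vs j * g (es!j) = orient src dst es vs (length es - 1) * g (es!(length es - 1))"
proof (cases "j = length es - 1")
  case True then show ?thesis by simp
next
  case False
  define K where "K = length es"
  have L: "length vs = K" "2 \<le> K" "distinct vs" "distinct es" using cyc unfolding K_def is_cycle_def by auto
  have jK: "j < K - 1" using False j K_def by auto
  define F where "F = {es!(K-1), es!j}"
  define S where "S = {v. (vs!0, v) \<in> (avoid_rel src dst F)\<^sup>*}"
  have neq: "es!j \<noteq> es!(K-1)" using L jK K_def by (simp add: nth_eq_iff_index_eq)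
  have vj: "vs!j \<in> S"
  proof -
    have "\<forall>e<j. es!(0+e) \<notin> F" using L jK K_def unfolding F_def by (auto simp: nth_eq_iff_index_eq)
    from walk[OF cyc _ this] jK K_def show ?thesis unfolding S_def by simp
  qed
  have jK1: "joins src dst (es!(K-1)) (vs!(K-1)) (vs!0)"
  proof -
    have "K - 1 < length es" using L K_def by simp
    from cycle_join[OF cyc this] have "joins src dst (es!(K-1)) (vs!(K-1)) (vs!((K-1+1) mod K))"
      using K_def by simp
    moreover have "(K-1+1) mod K = 0" using L by simp
    ultimately show ?thesis by simp
  qed
  have v0K: "vs!0 \<noteq> vs!(K-1)" using L nth_eq_iff_index_eq[of vs 0 "K-1"] by simp
  have vK: "vs!(K-1) \<notin> S"
  proof
    assume "vs!(K-1) \<in> S"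
    hence p: "(vs!0, vs!(K-1)) \<in> (avoid_rel src dst F)\<^sup>*" by (simp add: S_def)
    have inF: "es!(K-1) \<in> F" by (simp add: F_def)
    from path_cycle[OF p v0K jK1 inF] obtain es2 vs2 where c2: "is_cycle src dst es2 vs2"
      "es!(K-1) \<in> set es2" "\<forall>e\<in>set es2. e = es!(K-1) \<or> e \<notin> F" by blast
    have "es!(K-1) \<in> set es" using L K_def by simp
    moreover have "cycle_edge_set src dst (set es2)" "cycle_edge_set src dst (set es)"
      using c2(1) cyc unfolding cycle_edge_set_def by blast+
    ultimately have "set es2 = set es" using A2[rule_format, of "set es2" "es!(K-1)" "set es"] c2(2) by blast
    moreover have "es!j \<in> set es" using j by simp
    ultimately show False using c2(3) neq unfolding F_def by auto
  qed
  have vj1: "vs!(j+1) \<notin> S"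
  proof
    assume a: "vs!(j+1) \<in> S"
    have "\<forall>e<K-1-(j+1). es!((j+1)+e) \<notin> F" using L jK K_def unfolding F_def by (auto simp: nth_eq_iff_index_eq)
    moreover have eq: "(j+1)+(K-1-(j+1)) = K - 1" using jK by simp
    moreover have "(j+1)+(K-1-(j+1)) < length es" using eq L K_def by simp
    ultimately have W: "(vs!(j+1), vs!((j+1)+(K-1-(j+1)))) \<in> (avoid_rel src dst F)\<^sup>*"
      using walk[OF cyc] by blast
    have "(vs!(j+1), vs!(K-1)) \<in> (avoid_rel src dst F)\<^sup>*" using W unfolding eq .
    with a have "vs!(K-1) \<in> S" unfolding S_def by simp
    with vK show False by simp
  qed
  have v0: "vs!0 \<in> S" by (simp add: S_def)
  have jj1: "joins src dst (es!j) (vs!j) (vs!(j+1))"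
  proof -
    from cycle_join[OF cyc j] have "joins src dst (es!j) (vs!j) (vs!((j+1) mod K))" using K_def by simp
    moreover have "(j+1) mod K = j + 1" using jK by simp
    ultimately show ?thesis by simp
  qed
  have vjj: "vs!j \<noteq> vs!(j+1)" using vj vj1 by auto
  from cut_lemma[OF nl circ S_def]
  have "(\<Sum>l\<in>F. g l * (of_bool (src l \<in> S) - of_bool (dst l \<in> S))) = 0" .
  then have sum2: "g (es!(K-1)) * (of_bool (src (es!(K-1)) \<in> S) - of_bool (dst (es!(K-1)) \<in> S))
      + g (es!j) * (of_bool (src (es!j) \<in> S) - of_bool (dst (es!j) \<in> S)) = 0"
    unfolding F_def using neq by simp
  have t1: "g (es!(K-1)) * (of_bool (src (es!(K-1)) \<in> S) - of_bool (dst (es!(K-1)) \<in> S))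
     = - orient src dst es vs (K-1) * g (es!(K-1))"
  proof -
    have "(src (es!(K-1)) = vs!(K-1) \<and> dst (es!(K-1)) = vs!0) \<or> (src (es!(K-1)) = vs!0 \<and> dst (es!(K-1)) = vs!(K-1))"
      using jK1 unfolding joins_def by blast
    then show ?thesis
    proof
      assume h: "src (es!(K-1)) = vs!(K-1) \<and> dst (es!(K-1)) = vs!0"
      then show ?thesis using v0 vK by (simp add: orient_def)
    next
      assume h: "src (es!(K-1)) = vs!0 \<and> dst (es!(K-1)) = vs!(K-1)"
      then show ?thesis using v0 vK v0K by (simp add: orient_def)
    qed
  qed
  have t2: "g (es!j) * (of_bool (src (es!j) \<in> S) - of_bool (dst (es!j) \<in> S))
     = orient src dst es vs j * g (es!j)"
  proof -
    have "(src (es!j) = vs!j \<and> dst (es!j) = vs!(j+1)) \<or> (src (es!j) = vs!(j+1) \<and> dst (es!j) = vs!j)"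
      using jj1 unfolding joins_def by blast
    then show ?thesis
    proof
      assume h: "src (es!j) = vs!j \<and> dst (es!j) = vs!(j+1)"
      then show ?thesis using vj vj1 by (simp add: orient_def)
    next
      assume h: "src (es!j) = vs!(j+1) \<and> dst (es!j) = vs!j"
      then show ?thesis using vj vj1 vjj by (simp add: orient_def)
    qed
  qed
  show ?thesis using sum2 t1 t2 K_def by simp
qed

lemma bridge:
  fixes g :: "'e::finite \<Rightarrow> real" and src dst :: "'e \<Rightarrow> 'n::finite"
  assumes nl: "\<forall>l. src l \<noteq> dst l" and circ: "\<forall>v. incT src dst g v = 0"
    and nc: "\<not> (\<exists>C. cycle_edge_set src dst C \<and> l \<in> C)"
  shows "g l = 0"
proof -
  define F where "F = {l}"
  define S where "S = {v. (src l, v) \<in> (avoid_rel src dst F)\<^sup>*}"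
  have d: "dst l \<notin> S"
  proof
    assume "dst l \<in> S"
    hence p: "(src l, dst l) \<in> (avoid_rel src dst F)\<^sup>*" by (simp add: S_def)
    have j: "joins src dst l (dst l) (src l)" by (simp add: joins_def)
    from path_cycle[OF p _ j] nl obtain es vs where "is_cycle src dst es vs" "l \<in> set es"
      unfolding F_def by blast
    then show False using nc unfolding cycle_edge_set_def by blast
  qed
  have s: "src l \<in> S" by (simp add: S_def)
  from cut_lemma[OF nl circ S_def] show ?thesis using s d unfolding F_def by simp
qed



lemma half_lemma:
  fixes f fs d ds c :: "nat \<Rightarrow> real" and t :: real and k :: nat
  assumes k: "0 < k" and c: "\<forall>i<k. c i > 0" and ft: "\<forall>i<k. f i = fs i + t" and t: "t \<ge> 0"
   and sd: "(\<Sum>i<k. d i) = 0" and sds: "(\<Sum>i<k. ds i) = 0"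
   and rel: "\<forall>i<k. (f i \<ge> 0 \<and> d i \<ge> c i * (f i)^2) \<or> (f i \<le> 0 \<and> d i \<le> - (c i * (f i)^2))"
   and rels: "\<forall>i<k. ds i = c i * sgn (fs i) * (fs i)^2"
  shows "(\<Sum>i<k. max (ds i) 0) \<le> (\<Sum>i<k. max (d i) 0) \<and>
    ((\<Sum>i<k. max (ds i) 0) = (\<Sum>i<k. max (d i) 0) \<longrightarrow> t = 0 \<and> (\<forall>i<k. max (d i) 0 = max (ds i) 0))"
proof -
  have pw: "max (ds i) 0 \<le> max (d i) 0" if i: "i < k" for i
  proof (cases "fs i > 0")
    case True
    then have fi: "f i \<ge> fs i" "f i > 0" using ft t i by auto
    then have "d i \<ge> c i * (f i)^2" using rel i by auto
    moreover have "c i * (fs i)^2 \<le> c i * (f i)^2" using c i fi True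
      by (intro mult_left_mono power_mono) auto
    moreover have "ds i = c i * (fs i)^2" using rels i True by simp
    ultimately show ?thesis by simp
  next
    case False
    then have "ds i \<le> 0" using rels i c
      by (cases "fs i = 0") (auto simp: sgn_if)
    then show ?thesis by simp
  qed
  have le: "(\<Sum>i<k. max (ds i) 0) \<le> (\<Sum>i<k. max (d i) 0)"
    by (rule sum_mono) (use pw in auto)
  moreover have "(\<Sum>i<k. max (ds i) 0) = (\<Sum>i<k. max (d i) 0) \<longrightarrow> t = 0 \<and> (\<forall>i<k. max (d i) 0 = max (ds i) 0)"
  proof
    assume eq: "(\<Sum>i<k. max (ds i) 0) = (\<Sum>i<k. max (d i) 0)"
    have pe: "\<forall>i<k. max (d i) 0 = max (ds i) 0"
    proof (intro allI impI)
      fix i assume "i < k"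
      then show "max (d i) 0 = max (ds i) 0"
        using sum_mono_inv[OF eq, of i] pw by auto
    qed
    have "t = 0"
    proof (cases "\<exists>i<k. fs i > 0")
      case True
      then obtain i where i: "i < k" "fs i > 0" by blast
      then have fi: "f i \<ge> fs i" "f i > 0" using ft t by auto
      then have di: "d i \<ge> c i * (f i)^2" using rel i by auto
      have dsi: "ds i = c i * (fs i)^2" using rels i by simp
      have "0 < c i * (fs i)^2" using c i by simp
      have "0 \<le> c i * (f i)^2" using c i by (intro mult_nonneg_nonneg) auto
      then have "max (d i) 0 = d i" using di by simp
      moreover have "max (ds i) 0 = ds i" using dsi \<open>0 < c i * (fs i)^2\<close> by simp
      moreover have "max (d i) 0 = max (ds i) 0" using pe i(1) by blast
      ultimately have "d i = ds i" by linarith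
      then have "c i * (f i)^2 \<le> c i * (fs i)^2" using di dsi by simp
      moreover have ci: "0 < c i" using c i by simp
      ultimately have sq: "(f i)^2 \<le> (fs i)^2" using mult_le_cancel_left_pos[OF ci] by blast
      have "0 \<le> fs i" using i(2) by simp
      from power2_le_imp_le[OF sq this] have "f i \<le> fs i" .
      then show ?thesis using fi ft i t by auto
    next
      case False
      then have fs0: "\<forall>i<k. fs i \<le> 0" by auto
      have dsn: "\<forall>i<k. 0 \<le> - ds i"
      proof (intro allI impI)
        fix i assume i: "i < k"
        show "0 \<le> - ds i"
        proof (cases "fs i = 0")
          case True then show ?thesis using rels i by simp
        next
          case False
          then have "fs i < 0" using fs0 i by force
          then have "ds i = - (c i * (fs i)^2)" using rels i by simp
          moreover have "0 \<le> c i * (fs i)^2" using c i by (intro mult_nonneg_nonneg) auto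
          ultimately show ?thesis by simp
        qed
      qed
      have "(\<Sum>i<k. - ds i) = 0" using sds by (simp add: sum_negf)
      then have "\<forall>i\<in>{..<k}. - ds i = 0" using sum_nonneg_eq_0_iff[of "{..<k}" "\<lambda>i. - ds i"] dsn by auto
      then have fsz: "\<forall>i<k. fs i = 0"
      proof (intro allI impI)
        fix i assume z: "\<forall>i\<in>{..<k}. - ds i = 0" and i: "i < k"
        show "fs i = 0"
        proof (rule ccontr)
          assume ne: "fs i \<noteq> 0"
          then have "fs i < 0" using fs0 i by force
          then have "ds i = - (c i * (fs i)^2)" using rels i by simp
          moreover have "0 < c i * (fs i)^2" using c i ne by simp
          moreover have "ds i = 0" using z i by simp
          ultimately show False by linarith
        qed
      qed
      show "t = 0"
      proof (rule ccontr)
        assume "t \<noteq> 0"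
        then have tp: "t > 0" using t by simp
        have "\<forall>i<k. d i > 0"
        proof (intro allI impI)
          fix i assume i: "i < k"
          then have "f i = t" using ft fsz by simp
          then have "d i \<ge> c i * t^2" using rel i tp by auto
          moreover have "c i * t^2 > 0" using c i tp by simp
          ultimately show "d i > 0" by simp
        qed
        then have "0 < (\<Sum>i<k. d i)" using k by (intro sum_pos) auto
        then show False using sd by simp
      qed
    qed
    with pe show "t = 0 \<and> (\<forall>i<k. max (d i) 0 = max (ds i) 0)" by simp
  qed
  ultimately show ?thesis by blast
qed

lemma abs_sum_pos:
  fixes x :: "nat \<Rightarrow> real"
  assumes "(\<Sum>i<k. x i) = 0"
  shows "(\<Sum>i<k. \<bar>x i\<bar>) = 2 * (\<Sum>i<k. max (x i) 0)" "(\<Sum>i<k. \<bar>x i\<bar>) = 2 * (\<Sum>i<k. max (- x i) 0)"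
proof -
  have "(\<Sum>i<k. \<bar>x i\<bar>) = (\<Sum>i<k. 2 * max (x i) 0 - x i)" by (rule sum.cong) auto
  also have "\<dots> = 2 * (\<Sum>i<k. max (x i) 0)" using assms by (simp add: sum_subtractf sum_distrib_left)
  finally show "(\<Sum>i<k. \<bar>x i\<bar>) = 2 * (\<Sum>i<k. max (x i) 0)" .
  have "(\<Sum>i<k. \<bar>x i\<bar>) = (\<Sum>i<k. 2 * max (- x i) 0 + x i)" by (rule sum.cong) auto
  also have "\<dots> = 2 * (\<Sum>i<k. max (- x i) 0)" using assms by (simp add: sum.distrib sum_distrib_left)
  finally show "(\<Sum>i<k. \<bar>x i\<bar>) = 2 * (\<Sum>i<k. max (- x i) 0)" .
qed

lemma cyc_opt:
  fixes f fs d ds c :: "nat \<Rightarrow> real" and t :: real and k :: nat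
  assumes k: "0 < k" and c: "\<forall>i<k. c i > 0" and ft: "\<forall>i<k. f i = fs i + t"
   and sd: "(\<Sum>i<k. d i) = 0" and sds: "(\<Sum>i<k. ds i) = 0"
   and rel: "\<forall>i<k. (f i \<ge> 0 \<and> d i \<ge> c i * (f i)^2) \<or> (f i \<le> 0 \<and> d i \<le> - (c i * (f i)^2))"
   and rels: "\<forall>i<k. ds i = c i * sgn (fs i) * (fs i)^2"
  shows "(\<Sum>i<k. \<bar>ds i\<bar>) \<le> (\<Sum>i<k. \<bar>d i\<bar>) \<and>
    ((\<Sum>i<k. \<bar>ds i\<bar>) = (\<Sum>i<k. \<bar>d i\<bar>) \<longrightarrow> t = 0 \<and> (\<forall>i<k. d i = ds i))"
proof -
  note P = half_lemma[OF k c ft _ sd sds rel rels]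
  have ft': "\<forall>i<k. - f i = - fs i + - t" using ft by simp
  have sd': "(\<Sum>i<k. - d i) = 0" using sd by (simp add: sum_negf)
  have sds': "(\<Sum>i<k. - ds i) = 0" using sds by (simp add: sum_negf)
  have rel': "\<forall>i<k. (- f i \<ge> 0 \<and> - d i \<ge> c i * (- f i)^2) \<or> (- f i \<le> 0 \<and> - d i \<le> - (c i * (- f i)^2))"
    using rel by auto
  have rels': "\<forall>i<k. - ds i = c i * sgn (- fs i) * (- fs i)^2" using rels by (simp add: sgn_minus)
  note N = half_lemma[OF k c ft' _ sd' sds' rel' rels']
  note A = abs_sum_pos[OF sd] and As = abs_sum_pos[OF sds]
  have P1: "(\<Sum>i<k. max (ds i) 0) \<le> (\<Sum>i<k. max (d i) 0)" if "t \<ge> 0"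
    using P[OF that] by blast
  have P2: "t = 0 \<and> (\<forall>i<k. max (d i) 0 = max (ds i) 0)"
    if "t \<ge> 0" "(\<Sum>i<k. max (ds i) 0) = (\<Sum>i<k. max (d i) 0)"
    using P[OF that(1)] that(2) by blast
  have N1: "(\<Sum>i<k. max (- ds i) 0) \<le> (\<Sum>i<k. max (- d i) 0)" if "t \<le> 0"
    using N that by simp
  have N2: "- t = 0 \<and> (\<forall>i<k. max (- d i) 0 = max (- ds i) 0)"
    if "t \<le> 0" "(\<Sum>i<k. max (- ds i) 0) = (\<Sum>i<k. max (- d i) 0)"
  proof -
    have "0 \<le> - t" using that(1) by simp
    from N[OF this] that(2) show ?thesis by blast
  qed
  have ineq: "(\<Sum>i<k. \<bar>ds i\<bar>) \<le> (\<Sum>i<k. \<bar>d i\<bar>)"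
  proof (cases "t \<ge> 0")
    case True then show ?thesis using P1 A(1) As(1) by linarith
  next
    case False then show ?thesis using N1 A(2) As(2) by linarith
  qed
  moreover have "(\<Sum>i<k. \<bar>ds i\<bar>) = (\<Sum>i<k. \<bar>d i\<bar>) \<longrightarrow> t = 0 \<and> (\<forall>i<k. d i = ds i)"
  proof
    assume eq: "(\<Sum>i<k. \<bar>ds i\<bar>) = (\<Sum>i<k. \<bar>d i\<bar>)"
    have e1: "(\<Sum>i<k. max (ds i) 0) = (\<Sum>i<k. max (d i) 0)" using eq A(1) As(1) by linarith
    have e2: "(\<Sum>i<k. max (- ds i) 0) = (\<Sum>i<k. max (- d i) 0)" using eq A(2) As(2) by linarith
    have t0: "t = 0"
    proof (cases "t \<ge> 0")
      case True then show ?thesis using P2[OF _ e1] by blast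
    next
      case False then show ?thesis using N2[OF _ e2] by simp
    qed
    have p1: "\<forall>i<k. max (d i) 0 = max (ds i) 0" using P2[OF _ e1] t0 by simp
    have p2: "\<forall>i<k. max (- d i) 0 = max (- ds i) 0" using N2[OF _ e2] t0 by simp
    have "\<forall>i<k. d i = ds i"
    proof (intro allI impI)
      fix i assume "i < k"
      then have "max (d i) 0 = max (ds i) 0" "max (- d i) 0 = max (- ds i) 0" using p1 p2 by auto
      then show "d i = ds i" by linarith
    qed
    with t0 show "t = 0 \<and> (\<forall>i<k. d i = ds i)" by simp
  qed
  ultimately show ?thesis by blast
qed

lemma sum_shift_mod:
  fixes h :: "nat \<Rightarrow> real"
  assumes "0 < k"
  shows "(\<Sum>i<k. h ((i+1) mod k)) = (\<Sum>i<k. h i)"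
proof -
  obtain n where n: "k = Suc n" using assms by (cases k) auto
  have "(\<Sum>i<Suc n. h ((i+1) mod Suc n)) = (\<Sum>i<n. h ((i+1) mod Suc n)) + h 0" by simp
  also have "(\<Sum>i<n. h ((i+1) mod Suc n)) = (\<Sum>i<n. h (Suc i))" by (rule sum.cong) auto
  also have "(\<Sum>i<n. h (Suc i)) + h 0 = (\<Sum>i<Suc n. h i)" using sum.lessThan_Suc_shift[of h n] by linarith
  finally show ?thesis using n by simp
qed

lemma sum_set_nth:
  "distinct xs \<Longrightarrow> sum h (set xs) = (\<Sum>i<length xs. h (xs!i))"
  by (metis bij_betw_nth sum.reindex_bij_betw)

lemma orient_diff:
  assumes cyc: "is_cycle src dst es vs" and i: "i < length es"
  shows "orient src dst es vs i * (p (src (es!i)) - p (dst (es!i))) = p (vs!i) - p (vs!((i+1) mod length es))"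
proof -
  have j: "joins src dst (es!i) (vs!i) (vs!((i+1) mod length es))" by (rule cycle_join[OF cyc i])
  have n: "vs!i \<noteq> vs!((i+1) mod length es)" by (rule cycle_neq[OF cyc i])
  from j have "(src (es!i) = vs!i \<and> dst (es!i) = vs!((i+1) mod length es)) \<or>
     (src (es!i) = vs!((i+1) mod length es) \<and> dst (es!i) = vs!i)" unfolding joins_def by blast
  then show ?thesis
  proof
    assume h: "src (es!i) = vs!i \<and> dst (es!i) = vs!((i+1) mod length es)"
    then show ?thesis by (simp add: orient_def)
  next
    assume h: "src (es!i) = vs!((i+1) mod length es) \<and> dst (es!i) = vs!i"
    then show ?thesis using n by (simp add: orient_def)
  qed
qed

lemma orient_pm: "orient src dst es vs i = 1 \<or> orient src dst es vs i = -1"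
  unfolding orient_def by simp

theorem theorem2:
  fixes src dst :: "'e::finite \<Rightarrow> 'n::finite"
    and Pa :: "'e set" and r :: 'n and psi_r :: real
    and q :: "'n \<Rightarrow> real" and a alpha :: "'e \<Rightarrow> real"
  assumes no_loops: "\<forall>l. src l \<noteq> dst l"
    and conn: "connected_graph src dst"
    and A1: "\<forall>l\<in>Pa. \<not> (\<exists>C. cycle_edge_set src dst C \<and> l \<in> C)"
    and A2: "\<forall>l. \<forall>C C'. cycle_edge_set src dst C \<and> l \<in> C \<and> cycle_edge_set src dst C' \<and> l \<in> C'
                \<longrightarrow> C = C'"
    and q_sum: "(\<Sum>v\<in>UNIV. q v) = 0"
    and a_pos: "\<forall>l. l \<notin> Pa \<longrightarrow> a l > 0"
    and alpha_pos: "\<forall>l\<in>Pa. alpha l > 0"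
    and feas: "\<exists>phi psi. G1 src dst Pa r psi_r q a alpha phi psi"
  shows "\<exists>M0. \<forall>M \<ge> M0. \<forall>phi psi x.
           G2_minimizer src dst Pa r psi_r q a alpha M phi psi x \<longrightarrow>
           G1 src dst Pa r psi_r q a alpha phi psi"
proof -
  obtain phis psis where G: "G1 src dst Pa r psi_r q a alpha phis psis" using feas by blast
  have G_r: "psis r = psi_r" and G_q: "\<forall>v. incT src dst phis v = q v"
    and G_pipe: "\<forall>l. l \<notin> Pa \<longrightarrow> psis (src l) - psis (dst l) = a l * sgn (phis l) * (phis l)\<^sup>2"
    and G_comp: "\<forall>l\<in>Pa. psis (dst l) = alpha l * psis (src l) \<and> phis l \<ge> 0"
    using G unfolding G1_def by auto
  define M0 where "M0 = (\<Sum>l\<in>- Pa. \<bar>phis l\<bar> + 2 * a l * (phis l)\<^sup>2)"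
  show ?thesis
  proof (intro exI allI impI)
    fix M phi psi x
    assume M: "M0 \<le> M" and min: "G2_minimizer src dst Pa r psi_r q a alpha M phi psi x"
    have Mge: "\<bar>phis l\<bar> + 2 * a l * (phis l)\<^sup>2 \<le> M" if l: "l \<notin> Pa" for l
    proof -
      have "\<bar>phis l\<bar> + 2 * a l * (phis l)\<^sup>2 \<le> M0" unfolding M0_def
      proof (rule member_le_sum)
        show "l \<in> - Pa" using l by simp
        fix y assume "y \<in> - Pa - {l}"
        then have "a y > 0" using a_pos by auto
        then show "0 \<le> \<bar>phis y\<bar> + 2 * a y * (phis y)\<^sup>2" by simp
      qed simp
      with M show ?thesis by simp
    qed
    have feasS: "G2_feasible src dst Pa r psi_r q a alpha M phis psis (\<lambda>l. 0 \<le> phis l)"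
      unfolding G2_feasible_def
    proof (intro conjI allI impI)
      show "psis r = psi_r" by (rule G_r)
      show "\<And>v. incT src dst phis v = q v" using G_q by simp
      show "\<forall>l\<in>Pa. psis (dst l) = alpha l * psis (src l) \<and> 0 \<le> phis l" by (rule G_comp)
      fix l assume l: "l \<notin> Pa"
      have al: "a l > 0" using a_pos l by simp
      have Dl: "psis (src l) - psis (dst l) = a l * sgn (phis l) * (phis l)\<^sup>2" using G_pipe l by simp
      have Ml: "\<bar>phis l\<bar> + 2 * a l * (phis l)\<^sup>2 \<le> M" by (rule Mge[OF l])
      have sq: "0 \<le> a l * (phis l)\<^sup>2" using al by simp
      show "- M * (1 - of_bool (0 \<le> phis l)) \<le> phis l"
        using Ml sq by (cases "0 \<le> phis l") auto
      show "phis l \<le> M * of_bool (0 \<le> phis l)"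
        using Ml sq by (cases "0 \<le> phis l") auto
      show "- M * (1 - of_bool (0 \<le> phis l)) \<le> psis (src l) - psis (dst l) - a l * (phis l)\<^sup>2"
      proof (cases "0 < phis l")
        case True then show ?thesis using Dl by simp
      next
        case False
        show ?thesis
        proof (cases "phis l = 0")
          case True then show ?thesis using Dl by simp
        next
          case False
          then have "phis l < 0" using \<open>\<not> 0 < phis l\<close> by simp
          then show ?thesis using Dl Ml sq by simp
        qed
      qed
      show "psis (src l) - psis (dst l) + a l * (phis l)\<^sup>2 \<le> M * of_bool (0 \<le> phis l)"
      proof (cases "0 < phis l")
        case True then show ?thesis using Dl Ml sq by simp
      next
        case False
        show ?thesis
        proof (cases "phis l = 0")
          case True then show ?thesis using Dl Ml by simp
        next
          case False
          then have "phis l < 0" using \<open>\<not> 0 < phis l\<close> by simp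
          then show ?thesis using Dl by simp
        qed
      qed
    qed
    have feas2: "G2_feasible src dst Pa r psi_r q a alpha M phi psi x"
      and opt: "G2_obj src dst Pa psi \<le> G2_obj src dst Pa psis"
      using min feasS unfolding G2_minimizer_def by blast+
    have F_r: "psi r = psi_r" and F_q: "\<forall>v. incT src dst phi v = q v"
      and F_comp: "\<forall>l\<in>Pa. psi (dst l) = alpha l * psi (src l) \<and> phi l \<ge> 0"
      using feas2 unfolding G2_feasible_def by auto
    have rel: "(phi l \<ge> 0 \<and> psi (src l) - psi (dst l) \<ge> a l * (phi l)\<^sup>2) \<or>
               (phi l \<le> 0 \<and> psi (src l) - psi (dst l) \<le> - (a l * (phi l)\<^sup>2))" if l: "l \<notin> Pa" for l
    proof -
      have h: "- M * (1 - of_bool (x l)) \<le> phi l \<and> phi l \<le> M * of_bool (x l) \<and>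
        - M * (1 - of_bool (x l)) \<le> psi (src l) - psi (dst l) - a l * (phi l)\<^sup>2 \<and>
        psi (src l) - psi (dst l) + a l * (phi l)\<^sup>2 \<le> M * of_bool (x l)"
        using feas2 l unfolding G2_feasible_def by blast
      show ?thesis
      proof (cases "x l")
        case True then show ?thesis using h by simp
      next
        case False then show ?thesis using h by simp
      qed
    qed
    define g where "g = (\<lambda>l. phi l - phis l)"
    have circ: "\<forall>v. incT src dst g v = 0"
    proof
      fix v
      have "incT src dst g v = incT src dst phi v - incT src dst phis v"
        unfolding incT_def g_def by (simp add: sum_subtractf algebra_simps)
      then show "incT src dst g v = 0" using F_q G_q by simp
    qed
    have cyc: "(\<Sum>l\<in>C. \<bar>psis (src l) - psis (dst l)\<bar>) \<le> (\<Sum>l\<in>C. \<bar>psi (src l) - psi (dst l)\<bar>) \<and>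
       ((\<Sum>l\<in>C. \<bar>psis (src l) - psis (dst l)\<bar>) = (\<Sum>l\<in>C. \<bar>psi (src l) - psi (dst l)\<bar>) \<longrightarrow>
        (\<forall>l\<in>C. psi (src l) - psi (dst l) = psis (src l) - psis (dst l) \<and> phi l = phis l))"
      if C: "cycle_edge_set src dst C" for C
    proof -
      obtain es vs where cy: "is_cycle src dst es vs" and Ces: "C = set es"
        using C unfolding cycle_edge_set_def by blast
      define K where "K = length es"
      have L: "length vs = K" "2 \<le> K" "distinct es" using cy unfolding is_cycle_def K_def by auto
      define ori where "ori = orient src dst es vs"
      have opm: "ori i = 1 \<or> ori i = -1" for i unfolding ori_def by (rule orient_pm)
      have pipe: "es!i \<notin> Pa" if "i < K" for i
      proof
        assume "es!i \<in> Pa"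
        moreover have "es!i \<in> C" using that Ces K_def by simp
        ultimately show False using A1 C by blast
      qed
      define t where "t = ori (K-1) * g (es!(K-1))"
      define f where "f = (\<lambda>i. ori i * phi (es!i))"
      define fs where "fs = (\<lambda>i. ori i * phis (es!i))"
      define d where "d = (\<lambda>i. ori i * (psi (src (es!i)) - psi (dst (es!i))))"
      define ds where "ds = (\<lambda>i. ori i * (psis (src (es!i)) - psis (dst (es!i))))"
      define c where "c = (\<lambda>i. a (es!i))"
      have k: "0 < K" using L by simp
      have cpos: "\<forall>i<K. c i > 0" using pipe a_pos unfolding c_def by blast
      have ft: "\<forall>i<K. f i = fs i + t"
      proof (intro allI impI)
        fix i assume i: "i < K"
        have "ori i * g (es!i) = t"
          using cycle_circ[OF no_loops circ A2 cy, of i] i unfolding ori_def t_def K_def by simp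
        then show "f i = fs i + t" unfolding f_def fs_def g_def by (simp add: algebra_simps)
      qed
      have sumzero: "(\<Sum>i<K. ori i * (p (src (es!i)) - p (dst (es!i)))) = 0" for p :: "'n \<Rightarrow> real"
      proof -
        have "(\<Sum>i<K. ori i * (p (src (es!i)) - p (dst (es!i)))) = (\<Sum>i<K. p (vs!i) - p (vs!((i+1) mod K)))"
          by (rule sum.cong) (use orient_diff[OF cy] K_def ori_def in auto)
        also have "\<dots> = (\<Sum>i<K. p (vs!i)) - (\<Sum>i<K. p (vs!((i+1) mod K)))" by (simp add: sum_subtractf)
        also have "(\<Sum>i<K. p (vs!((i+1) mod K))) = (\<Sum>i<K. p (vs!i))"
          using sum_shift_mod[OF k, of "\<lambda>i. p (vs!i)"] by simp
        finally show ?thesis by simp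
      qed
      have sd: "(\<Sum>i<K. d i) = 0" unfolding d_def by (rule sumzero)
      have sds: "(\<Sum>i<K. ds i) = 0" unfolding ds_def by (rule sumzero)
      have relc: "\<forall>i<K. (f i \<ge> 0 \<and> d i \<ge> c i * (f i)^2) \<or> (f i \<le> 0 \<and> d i \<le> - (c i * (f i)^2))"
      proof (intro allI impI)
        fix i assume i: "i < K"
        from rel[OF pipe[OF i]] opm[of i]
        show "(f i \<ge> 0 \<and> d i \<ge> c i * (f i)^2) \<or> (f i \<le> 0 \<and> d i \<le> - (c i * (f i)^2))"
          unfolding f_def d_def c_def by auto
      qed
      have rels: "\<forall>i<K. ds i = c i * sgn (fs i) * (fs i)^2"
      proof (intro allI impI)
        fix i assume i: "i < K"
        from G_pipe pipe[OF i] have "psis (src (es!i)) - psis (dst (es!i)) = a (es!i) * sgn (phis (es!i)) * (phis (es!i))\<^sup>2"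
          by simp
        with opm[of i] show "ds i = c i * sgn (fs i) * (fs i)^2"
          unfolding ds_def fs_def c_def by (auto simp: sgn_minus)
      qed
      note R = cyc_opt[OF k cpos ft sd sds relc rels]
      have absd: "(\<Sum>l\<in>C. \<bar>p (src l) - p (dst l)\<bar>) = (\<Sum>i<K. \<bar>ori i * (p (src (es!i)) - p (dst (es!i)))\<bar>)" for p :: "'n \<Rightarrow> real"
      proof -
        have "(\<Sum>l\<in>C. \<bar>p (src l) - p (dst l)\<bar>) = (\<Sum>i<K. \<bar>p (src (es!i)) - p (dst (es!i))\<bar>)"
          unfolding Ces K_def by (rule sum_set_nth[OF L(3)])
        also have "\<dots> = (\<Sum>i<K. \<bar>ori i * (p (src (es!i)) - p (dst (es!i)))\<bar>)"
        proof (rule sum.cong)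
          fix i
          show "\<bar>p (src (es!i)) - p (dst (es!i))\<bar> = \<bar>ori i * (p (src (es!i)) - p (dst (es!i)))\<bar>"
            using opm[of i] by (auto simp: abs_mult)
        qed simp
        finally show ?thesis .
      qed
      have A: "(\<Sum>l\<in>C. \<bar>psi (src l) - psi (dst l)\<bar>) = (\<Sum>i<K. \<bar>d i\<bar>)" unfolding d_def by (rule absd)
      have As: "(\<Sum>l\<in>C. \<bar>psis (src l) - psis (dst l)\<bar>) = (\<Sum>i<K. \<bar>ds i\<bar>)" unfolding ds_def by (rule absd)
      show ?thesis
      proof
        show "(\<Sum>l\<in>C. \<bar>psis (src l) - psis (dst l)\<bar>) \<le> (\<Sum>l\<in>C. \<bar>psi (src l) - psi (dst l)\<bar>)"
          using conjunct1[OF R] A As by linarith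
        show "(\<Sum>l\<in>C. \<bar>psis (src l) - psis (dst l)\<bar>) = (\<Sum>l\<in>C. \<bar>psi (src l) - psi (dst l)\<bar>) \<longrightarrow>
          (\<forall>l\<in>C. psi (src l) - psi (dst l) = psis (src l) - psis (dst l) \<and> phi l = phis l)"
        proof (intro impI ballI)
          fix l assume eq: "(\<Sum>l\<in>C. \<bar>psis (src l) - psis (dst l)\<bar>) = (\<Sum>l\<in>C. \<bar>psi (src l) - psi (dst l)\<bar>)"
            and l: "l \<in> C"
          have "(\<Sum>i<K. \<bar>ds i\<bar>) = (\<Sum>i<K. \<bar>d i\<bar>)" using eq A As by linarith
          from mp[OF conjunct2[OF R] this] have t0: "t = 0" and dd: "\<forall>i<K. d i = ds i" by auto
          from l obtain i where i: "i < K" "l = es!i" unfolding Ces K_def by (auto simp: in_set_conv_nth)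
          have o0: "ori i \<noteq> 0" using opm[of i] by auto
          from dd i have "d i = ds i" by simp
          then have "psi (src l) - psi (dst l) = psis (src l) - psis (dst l)"
            unfolding d_def ds_def using o0 i by simp
          moreover from ft t0 i have "f i = fs i" by simp
          then have "phi l = phis l" unfolding f_def fs_def using o0 i by simp
          ultimately show "psi (src l) - psi (dst l) = psis (src l) - psis (dst l) \<and> phi l = phis l" by simp
        qed
      qed
    qed
    have br: "phi l = phis l" if "\<not> (\<exists>C. cycle_edge_set src dst C \<and> l \<in> C)" for l
      using bridge[OF no_loops circ that] unfolding g_def by simp
    have brB: "\<bar>psis (src l) - psis (dst l)\<bar> \<le> \<bar>psi (src l) - psi (dst l)\<bar> \<and>
       (\<bar>psis (src l) - psis (dst l)\<bar> = \<bar>psi (src l) - psi (dst l)\<bar> \<longrightarrow>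
         psi (src l) - psi (dst l) = psis (src l) - psis (dst l))"
      if l: "l \<notin> Pa" "\<not> (\<exists>C. cycle_edge_set src dst C \<and> l \<in> C)" for l
    proof -
      have pe: "phi l = phis l" by (rule br[OF l(2)])
      have al: "a l > 0" using a_pos l by simp
      have Ds: "psis (src l) - psis (dst l) = a l * sgn (phi l) * (phi l)\<^sup>2" using G_pipe l pe by simp
      have rl: "(phi l \<ge> 0 \<and> psi (src l) - psi (dst l) \<ge> a l * (phi l)\<^sup>2) \<or>
               (phi l \<le> 0 \<and> psi (src l) - psi (dst l) \<le> - (a l * (phi l)\<^sup>2))" by (rule rel[OF l(1)])
      have sq: "0 \<le> a l * (phi l)\<^sup>2" using al by simp
      show ?thesis
      proof (cases "0 < phi l")
        case True
        then have "psi (src l) - psi (dst l) \<ge> a l * (phi l)\<^sup>2" using rl by auto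
        then show ?thesis using Ds True sq by auto
      next
        case False
        show ?thesis
        proof (cases "phi l = 0")
          case True
          then show ?thesis using Ds by simp
        next
          case False
          then have neg: "phi l < 0" using \<open>\<not> 0 < phi l\<close> by simp
          then have "psi (src l) - psi (dst l) \<le> - (a l * (phi l)\<^sup>2)" using rl by auto
          then show ?thesis using Ds neg sq by auto
        qed
      qed
    qed
    define Cs where "Cs = {C. cycle_edge_set src dst C}"
    define B where "B = - Pa - \<Union>Cs"
    have fU: "finite (UNIV :: 'e set)" by simp
    have fB: "finite B" using fU by (rule finite_subset[OF subset_UNIV])
    have fCs: "finite Cs" by simp
    have U: "\<Union>Cs \<subseteq> - Pa" using A1 unfolding Cs_def by blast
    have disj: "\<forall>C\<in>Cs. \<forall>C'\<in>Cs. C \<noteq> C' \<longrightarrow> C \<inter> C' = {}"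
      using A2 unfolding Cs_def by blast
    have split: "G2_obj src dst Pa p = (\<Sum>l\<in>B. \<bar>p (src l) - p (dst l)\<bar>) + (\<Sum>C\<in>Cs. \<Sum>l\<in>C. \<bar>p (src l) - p (dst l)\<bar>)"
      for p :: "'n \<Rightarrow> real"
    proof -
      have "G2_obj src dst Pa p = (\<Sum>l\<in>B. \<bar>p (src l) - p (dst l)\<bar>) + (\<Sum>l\<in>\<Union>Cs. \<bar>p (src l) - p (dst l)\<bar>)"
        unfolding G2_obj_def B_def by (rule sum.subset_diff[OF U]) simp
      also have "(\<Sum>l\<in>\<Union>Cs. \<bar>p (src l) - p (dst l)\<bar>) = (\<Sum>C\<in>Cs. \<Sum>l\<in>C. \<bar>p (src l) - p (dst l)\<bar>)"
        using sum.Union_disjoint[of Cs "\<lambda>l. \<bar>p (src l) - p (dst l)\<bar>"] disj by (simp add: o_def)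
      finally show ?thesis .
    qed
    have Bmem: "l \<notin> Pa" "\<not> (\<exists>C. cycle_edge_set src dst C \<and> l \<in> C)" if "l \<in> B" for l
      using that unfolding B_def Cs_def by auto
    have i1: "(\<Sum>l\<in>B. \<bar>psis (src l) - psis (dst l)\<bar>) \<le> (\<Sum>l\<in>B. \<bar>psi (src l) - psi (dst l)\<bar>)"
      by (rule sum_mono) (use brB Bmem in blast)
    have i2: "(\<Sum>C\<in>Cs. \<Sum>l\<in>C. \<bar>psis (src l) - psis (dst l)\<bar>) \<le> (\<Sum>C\<in>Cs. \<Sum>l\<in>C. \<bar>psi (src l) - psi (dst l)\<bar>)"
      by (rule sum_mono) (use cyc Cs_def in blast)
    have e1: "(\<Sum>l\<in>B. \<bar>psis (src l) - psis (dst l)\<bar>) = (\<Sum>l\<in>B. \<bar>psi (src l) - psi (dst l)\<bar>)"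
      and e2: "(\<Sum>C\<in>Cs. \<Sum>l\<in>C. \<bar>psis (src l) - psis (dst l)\<bar>) = (\<Sum>C\<in>Cs. \<Sum>l\<in>C. \<bar>psi (src l) - psi (dst l)\<bar>)"
      using i1 i2 opt split[of psi] split[of psis] by linarith+
    have eB: "psi (src l) - psi (dst l) = psis (src l) - psis (dst l)" if "l \<in> B" for l
    proof -
      have "\<bar>psis (src l) - psis (dst l)\<bar> = \<bar>psi (src l) - psi (dst l)\<bar>"
      proof -
        have le: "\<And>i. i \<in> B \<Longrightarrow> \<bar>psis (src i) - psis (dst i)\<bar> \<le> \<bar>psi (src i) - psi (dst i)\<bar>"
          using brB Bmem by blast
        show ?thesis by (rule sum_mono_inv[OF e1]) (use le that fB in auto)
      qed
      then show ?thesis using brB Bmem that by blast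
    qed
    have eC: "psi (src l) - psi (dst l) = psis (src l) - psis (dst l) \<and> phi l = phis l"
      if "C \<in> Cs" "l \<in> C" for C l
    proof -
      have "(\<Sum>l\<in>C. \<bar>psis (src l) - psis (dst l)\<bar>) = (\<Sum>l\<in>C. \<bar>psi (src l) - psi (dst l)\<bar>)"
      proof -
        have le: "\<And>C. C \<in> Cs \<Longrightarrow> (\<Sum>l\<in>C. \<bar>psis (src l) - psis (dst l)\<bar>) \<le> (\<Sum>l\<in>C. \<bar>psi (src l) - psi (dst l)\<bar>)"
          using cyc unfolding Cs_def by blast
        show ?thesis by (rule sum_mono_inv[OF e2]) (use le that fCs in auto)
      qed
      moreover have "cycle_edge_set src dst C" using that(1) unfolding Cs_def by simp
      ultimately show ?thesis using cyc[of C] that(2) by blast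
    qed
    have phiEq: "phi l = phis l" for l
    proof (cases "\<exists>C. cycle_edge_set src dst C \<and> l \<in> C")
      case True then show ?thesis using eC Cs_def by blast
    next
      case False then show ?thesis by (rule br)
    qed
    have DEq: "psi (src l) - psi (dst l) = psis (src l) - psis (dst l)" if "l \<notin> Pa" for l
    proof (cases "\<exists>C. cycle_edge_set src dst C \<and> l \<in> C")
      case True then show ?thesis using eC Cs_def by blast
    next
      case False then show ?thesis using eB that unfolding B_def Cs_def by blast
    qed
    have psiEq: "psi v = psis v" for v
    proof -
      have "(r, v) \<in> {(a, b). \<exists>l. joins src dst l a b}\<^sup>*" using conn unfolding connected_graph_def by blast
      then show ?thesis
      proof (induction rule: rtrancl_induct)
        case base then show ?case using F_r G_r by simp
      next
        case (step y z)
        then obtain l where l: "joins src dst l y z" by blast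
        show ?case
        proof (cases "l \<in> Pa")
          case True
          have al: "alpha l > 0" using alpha_pos True by blast
          have c1: "psi (dst l) = alpha l * psi (src l)" using F_comp True by blast
          have c2: "psis (dst l) = alpha l * psis (src l)" using G_comp True by blast
          from l show ?thesis
          proof (unfold joins_def, elim disjE conjE)
            assume "src l = y" "dst l = z"
            then show ?thesis using c1 c2 step.IH by simp
          next
            assume "src l = z" "dst l = y"
            then show ?thesis using c1 c2 step.IH al by simp
          qed
        next
          case False
          have D: "psi (src l) - psi (dst l) = psis (src l) - psis (dst l)" by (rule DEq[OF False])
          from l show ?thesis
          proof (unfold joins_def, elim disjE conjE)
            assume "src l = y" "dst l = z"
            then show ?thesis using D step.IH by simp
          next
            assume "src l = z" "dst l = y"
            then show ?thesis using D step.IH by simp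
          qed
        qed
      qed
    qed
    have "phi = phis" "psi = psis" using phiEq psiEq by auto
    then show "G1 src dst Pa r psi_r q a alpha phi psi" using G by simp
  qed
qed

end
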